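(* Let $d\ge 0$ be an integer and let $G$ be a graph with $n\ge 2$ vertices and $\mathrm{tww}(G)\le d$. Then there exist disjoint sets $X,Y\subseteq V(G)$ with $|X|\ge n/(d+4)$ and $|Y|\ge n/(d+4)$ such that either every vertex of $X$ is adjacent to every vertex of $Y$, or no vertex of $X$ is adjacent to any vertex of $Y$. (That is, the class of graphs of twin-width at most $d$ has the strong Erdős–Hajnal property with $\varepsilon=1/(d+4)$.)
   Context: A trigraph $H$ consists of a vertex set $V(H)$ and two disjoint sets of unordered pairs of distinct vertices: black edges $E(H)$ and red edges $R(H)$. Two vertices are adjacent (neighbors) if they are joined by a black or a red edge. The red graph of $H$ is the graph $(V(H),R(H))$; $H$ is a $d$-trigraph if its red graph has maximum degree at most $d$. A graph is a trigraph with no red edges. Contracting two distinct vertices $u,v$ of a trigraph $H$ yields the trigraph obtained by deleting $u$ and $v$ and adding a new vertex $z$ such that, for every other vertex $x$: $zx$ is a black edge if both $ux$ and $vx$ are black edges; $zx$ is not an edge if $x$ is adjacent to neither $u$ nor $v$; and $zx$ is a red edge otherwise. All edges not incident to $u$ or $v$ are unchanged. A $d$-sequence of an $n$-vertex graph $G$ is a sequence of $d$-trigraphs $G=G_n,G_{n-1},\dots,G_1$ such that $G_1$ has a single vertex and each $G_{i-1}$ is obtained from $G_i$ by one contraction (so $G_i$ has $i$ vertices). The twin-width $\mathrm{tww}(G)$ of $G$ is the minimum $d$ such that $G$ admits a $d$-sequence. *)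

theory Defs
  imports Complex_Main
begin

definition is_graph :: "'a set \<Rightarrow> 'a set set \<Rightarrow> bool" where
  "is_graph V E \<longleftrightarrow> finite V \<and> (\<forall>e\<in>E. \<exists>x y. x \<noteq> y \<and> x \<in> V \<and> y \<in> V \<and> e = {x, y})"

text \<open>Trigraphs: vertex set, black edges, red edges (edges are 2-element sets).\<close>
record 'a trigraph =
  tV :: "'a set"
  tB :: "'a set set"
  tR :: "'a set set"

definition adjacent :: "'a trigraph \<Rightarrow> 'a \<Rightarrow> 'a \<Rightarrow> bool" where
  "adjacent H x y \<longleftrightarrow> {x, y} \<in> tB H \<union> tR H"

definition red_degree :: "'a trigraph \<Rightarrow> 'a \<Rightarrow> nat" where
  "red_degree H x = card {y. {x, y} \<in> tR H}"

definition is_d_trigraph :: "nat \<Rightarrow> 'a trigraph \<Rightarrow> bool" where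
  "is_d_trigraph d H \<longleftrightarrow> (\<forall>x\<in>tV H. red_degree H x \<le> d)"

definition graph_trigraph :: "'a set \<Rightarrow> 'a set set \<Rightarrow> 'a trigraph" where
  "graph_trigraph V E = \<lparr>tV = V, tB = E, tR = {}\<rparr>"

text \<open>Contract u and v of H into a new vertex z (z must not be one of the other
  remaining vertices; it may reuse the name u or v).\<close>
definition contract :: "'a trigraph \<Rightarrow> 'a \<Rightarrow> 'a \<Rightarrow> 'a \<Rightarrow> 'a trigraph" where
  "contract H u v z =
     \<lparr>tV = (tV H - {u, v}) \<union> {z},
      tB = {e \<in> tB H. u \<notin> e \<and> v \<notin> e}
           \<union> {{z, x} | x. x \<in> tV H - {u, v} \<and> {u, x} \<in> tB H \<and> {v, x} \<in> tB H},
      tR = {e \<in> tR H. u \<notin> e \<and> v \<notin> e}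
           \<union> {{z, x} | x. x \<in> tV H - {u, v} \<and> (adjacent H u x \<or> adjacent H v x)
                       \<and> \<not> ({u, x} \<in> tB H \<and> {v, x} \<in> tB H)}\<rparr>"

definition is_contraction :: "'a trigraph \<Rightarrow> 'a trigraph \<Rightarrow> bool" where
  "is_contraction H H' \<longleftrightarrow> (\<exists>u v z. u \<in> tV H \<and> v \<in> tV H \<and> u \<noteq> v \<and>
       z \<notin> tV H - {u, v} \<and> H' = contract H u v z)"

text \<open>A d-sequence G = G_n, ..., G_1, stored as the list [G_n, ..., G_1].\<close>
definition d_sequence :: "nat \<Rightarrow> 'a set \<Rightarrow> 'a set set \<Rightarrow> 'a trigraph list \<Rightarrow> bool" where
  "d_sequence d V E Hs \<longleftrightarrow>
     length Hs = card V \<and> Hs ! 0 = graph_trigraph V E \<and>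
     card (tV (Hs ! (card V - 1))) = 1 \<and>
     (\<forall>i < card V. is_d_trigraph d (Hs ! i)) \<and>
     (\<forall>i. i + 1 < card V \<longrightarrow> is_contraction (Hs ! i) (Hs ! (i + 1)))"

definition twin_width :: "'a set \<Rightarrow> 'a set set \<Rightarrow> nat" where
  "twin_width V E = (LEAST d. \<exists>Hs. d_sequence d V E Hs)"

end

theory Submission
  imports Defs
begin

definition wft :: "'a trigraph \<Rightarrow> bool" where
 "wft H \<longleftrightarrow> finite (tV H) \<and> (\<forall>e\<in>tB H \<union> tR H. e \<subseteq> tV H)"

lemma dbl_eq: "y \<noteq> z \<Longrightarrow> {z, y} = {z, x} \<longleftrightarrow> y = x"
  by (auto simp: doubleton_eq_iff)

definition pinv :: "'a set \<Rightarrow> 'a set set \<Rightarrow> 'a trigraph \<Rightarrow> ('a \<Rightarrow> 'a set) \<Rightarrow> bool" where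
"pinv V E H P \<longleftrightarrow> wft H \<and> (\<forall>x\<in>tV H. P x \<subseteq> V) \<and>
  (\<forall>x\<in>tV H. \<forall>y\<in>tV H. x\<noteq>y \<longrightarrow> P x \<inter> P y = {}) \<and> V \<subseteq> \<Union>(P ` tV H) \<and>
  (\<forall>x\<in>tV H. \<forall>y\<in>tV H. x\<noteq>y \<longrightarrow> {x,y}\<in>tB H \<longrightarrow> (\<forall>a\<in>P x. \<forall>b\<in>P y. {a,b}\<in>E)) \<and>
  (\<forall>x\<in>tV H. \<forall>y\<in>tV H. x\<noteq>y \<longrightarrow> \<not>adjacent H x y \<longrightarrow> (\<forall>a\<in>P x. \<forall>b\<in>P y. {a,b}\<notin>E))"

context
  fixes H :: "'a trigraph" and u v z :: 'a
  assumes wf: "wft H" and u: "u \<in> tV H" and v: "v \<in> tV H" and uv: "u \<noteq> v"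
    and z: "z \<notin> tV H - {u, v}"
begin

lemma c_V: "tV (contract H u v z) = tV H - {u, v} \<union> {z}"
  by (simp add: contract_def)

lemma c_L1B: "x \<in> tV H - {u,v} \<Longrightarrow> y \<in> tV H - {u,v} \<Longrightarrow>
   {x,y} \<in> tB (contract H u v z) \<longleftrightarrow> {x,y} \<in> tB H"
  using z by (auto simp: contract_def doubleton_eq_iff)

lemma c_L1R: "x \<in> tV H - {u,v} \<Longrightarrow> y \<in> tV H - {u,v} \<Longrightarrow>
   {x,y} \<in> tR (contract H u v z) \<longleftrightarrow> {x,y} \<in> tR H"
  using z by (auto simp: contract_def doubleton_eq_iff)

lemma c_L2B: "y \<in> tV H - {u,v} \<Longrightarrow>
   {z,y} \<in> tB (contract H u v z) \<longleftrightarrow> ({u,y} \<in> tB H \<and> {v,y} \<in> tB H)"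
proof
  assume y: "y \<in> tV H - {u,v}" and h: "{z,y} \<in> tB (contract H u v z)"
  have yz: "y \<noteq> z" using y z by auto
  show "{u,y} \<in> tB H \<and> {v,y} \<in> tB H"
  proof (cases "{z,y} \<in> tB H \<and> u \<notin> {z,y} \<and> v \<notin> {z,y}")
    case True
    then have "{z,y} \<subseteq> tV H" using wf unfolding wft_def by blast
    then show ?thesis using True z by auto
  next
    case False
    then obtain x where "{z,y} = {z,x}" "x \<in> tV H - {u, v}" "{u, x} \<in> tB H" "{v, x} \<in> tB H"
      using h by (auto simp: contract_def)
    then show ?thesis using dbl_eq[OF yz] by auto
  qed
next
  assume y: "y \<in> tV H - {u,v}" and "{u,y} \<in> tB H \<and> {v,y} \<in> tB H"
  then show "{z,y} \<in> tB (contract H u v z)" by (auto simp: contract_def)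
qed

lemma c_L2R: "y \<in> tV H - {u,v} \<Longrightarrow>
   {z,y} \<in> tR (contract H u v z) \<longleftrightarrow> ((adjacent H u y \<or> adjacent H v y) \<and> \<not> ({u,y} \<in> tB H \<and> {v,y} \<in> tB H))"
proof
  assume y: "y \<in> tV H - {u,v}" and h: "{z,y} \<in> tR (contract H u v z)"
  have yz: "y \<noteq> z" using y z by auto
  show "((adjacent H u y \<or> adjacent H v y) \<and> \<not> ({u,y} \<in> tB H \<and> {v,y} \<in> tB H))"
  proof (cases "{z,y} \<in> tR H \<and> u \<notin> {z,y} \<and> v \<notin> {z,y}")
    case True
    then have "{z,y} \<subseteq> tV H" using wf unfolding wft_def by blast
    then show ?thesis using True z by auto
  next
    case False
    then obtain x where "{z,y} = {z,x}" "x \<in> tV H - {u, v}" "(adjacent H u x \<or> adjacent H v x)"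
       "\<not> ({u, x} \<in> tB H \<and> {v, x} \<in> tB H)"
      using h by (auto simp: contract_def)
    then show ?thesis using dbl_eq[OF yz] by auto
  qed
next
  assume y: "y \<in> tV H - {u,v}" and "((adjacent H u y \<or> adjacent H v y) \<and> \<not> ({u,y} \<in> tB H \<and> {v,y} \<in> tB H))"
  then show "{z,y} \<in> tR (contract H u v z)" by (auto simp: contract_def)
qed

lemma c_wf: "wft (contract H u v z)"
  using wf unfolding wft_def contract_def by auto

lemma c_pinv:
  assumes p: "pinv V E H P"
  shows "pinv V E (contract H u v z) (P(z := P u \<union> P v))"
proof -
  let ?H = "contract H u v z" and ?P = "P(z := P u \<union> P v)"
  have sub: "\<forall>x\<in>tV H. P x \<subseteq> V" and dis: "\<forall>x\<in>tV H. \<forall>y\<in>tV H. x\<noteq>y \<longrightarrow> P x \<inter> P y = {}"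
   and cov: "V \<subseteq> \<Union>(P ` tV H)"
   and blk: "\<forall>x\<in>tV H. \<forall>y\<in>tV H. x\<noteq>y \<longrightarrow> {x,y}\<in>tB H \<longrightarrow> (\<forall>a\<in>P x. \<forall>b\<in>P y. {a,b}\<in>E)"
   and non: "\<forall>x\<in>tV H. \<forall>y\<in>tV H. x\<noteq>y \<longrightarrow> \<not>adjacent H x y \<longrightarrow> (\<forall>a\<in>P x. \<forall>b\<in>P y. {a,b}\<notin>E)"
    using p unfolding pinv_def by auto
  have V: "tV ?H = tV H - {u, v} \<union> {z}" by (rule c_V)
  have P1: "\<And>x. x \<in> tV H - {u,v} \<Longrightarrow> ?P x = P x" using z by auto
  have Pz: "?P z = P u \<union> P v" by simp
  have a: "\<forall>x\<in>tV ?H. ?P x \<subseteq> V" using sub u v P1 V by auto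
  have b: "\<forall>x\<in>tV ?H. \<forall>y\<in>tV ?H. x\<noteq>y \<longrightarrow> ?P x \<inter> ?P y = {}"
  proof (intro ballI impI)
    fix x y assume x: "x \<in> tV ?H" and y: "y \<in> tV ?H" and xy: "x \<noteq> y"
    show "?P x \<inter> ?P y = {}"
    proof (cases "x = z")
      case True
      then have "y \<in> tV H - {u,v}" using y xy V by auto
      moreover have "P u \<inter> P y = {}" "P v \<inter> P y = {}" using dis u v calculation by auto
      ultimately show ?thesis using True P1 by auto
    next
      case False
      then have x': "x \<in> tV H - {u,v}" using x V by auto
      show ?thesis
      proof (cases "y = z")
        case True
        moreover have "P u \<inter> P x = {}" "P v \<inter> P x = {}" using dis u v x' by auto
        ultimately show ?thesis using x' P1 by auto
      next
        case False
        then have "y \<in> tV H - {u,v}" using y V by auto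
        then show ?thesis using x' P1 dis xy by auto
      qed
    qed
  qed
  have c: "V \<subseteq> \<Union>(?P ` tV ?H)"
  proof
    fix a assume "a \<in> V"
    then obtain x where x: "x \<in> tV H" "a \<in> P x" using cov by auto
    show "a \<in> \<Union>(?P ` tV ?H)"
    proof (cases "x \<in> {u,v}")
      case True
      then have "a \<in> ?P z" using x by auto
      then show ?thesis using V by auto
    next
      case False
      then have "x \<in> tV H - {u,v}" using x by auto
      then show ?thesis using P1 V x by force
    qed
  qed
  have d: "\<forall>x\<in>tV ?H. \<forall>y\<in>tV ?H. x\<noteq>y \<longrightarrow> {x,y}\<in>tB ?H \<longrightarrow> (\<forall>a\<in>?P x. \<forall>b\<in>?P y. {a,b}\<in>E)"
  proof (intro ballI impI)
    fix x y a b assume x: "x \<in> tV ?H" and y: "y \<in> tV ?H" and xy: "x \<noteq> y"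
      and e: "{x,y}\<in>tB ?H" and a: "a \<in> ?P x" and b: "b \<in> ?P y"
    show "{a,b} \<in> E"
    proof (cases "x = z")
      case True
      then have y': "y \<in> tV H - {u,v}" using y xy V by auto
      then have "{u,y} \<in> tB H \<and> {v,y} \<in> tB H" using c_L2B e True by auto
      then show ?thesis using a b True P1[OF y'] blk u v y' by auto
    next
      case False
      then have x': "x \<in> tV H - {u,v}" using x V by auto
      show ?thesis
      proof (cases "y = z")
        case True
        then have e': "{z,x} \<in> tB ?H" using e by (simp add: insert_commute)
        then have "{u,x} \<in> tB H \<and> {v,x} \<in> tB H" using c_L2B x' by auto
        then have "{b,a} \<in> E" using a b True P1[OF x'] blk u v x' by auto
        then show ?thesis by (simp add: insert_commute)
      next
        case False
        then have y': "y \<in> tV H - {u,v}" using y V by auto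
        then show ?thesis using x' P1 blk xy c_L1B e a b by auto
      qed
    qed
  qed
  have e: "\<forall>x\<in>tV ?H. \<forall>y\<in>tV ?H. x\<noteq>y \<longrightarrow> \<not>adjacent ?H x y \<longrightarrow> (\<forall>a\<in>?P x. \<forall>b\<in>?P y. {a,b}\<notin>E)"
  proof (intro ballI impI)
    fix x y a b assume x: "x \<in> tV ?H" and y: "y \<in> tV ?H" and xy: "x \<noteq> y"
      and e: "\<not>adjacent ?H x y" and a: "a \<in> ?P x" and b: "b \<in> ?P y"
    show "{a,b} \<notin> E"
    proof (cases "x = z")
      case True
      then have y': "y \<in> tV H - {u,v}" using y xy V by auto
      then have "\<not> adjacent H u y \<and> \<not> adjacent H v y" using c_L2B c_L2R e True
        unfolding adjacent_def by blast
      then show ?thesis using a b True P1[OF y'] non u v y' by auto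
    next
      case False
      then have x': "x \<in> tV H - {u,v}" using x V by auto
      show ?thesis
      proof (cases "y = z")
        case True
        then have e': "\<not> adjacent ?H z x" using e by (simp add: insert_commute adjacent_def)
        then have "\<not> adjacent H u x \<and> \<not> adjacent H v x" using c_L2B c_L2R x'
          unfolding adjacent_def by blast
        then have "{b,a} \<notin> E" using a b True P1[OF x'] non u v x' by auto
        then show ?thesis by (simp add: insert_commute)
      next
        case False
        then have y': "y \<in> tV H - {u,v}" using y V by auto
        then have "\<not> adjacent H x y" using e c_L1B c_L1R x' unfolding adjacent_def by blast
        then show ?thesis using x' y' P1 non xy a b by auto
      qed
    qed
  qed
  show ?thesis unfolding pinv_def using a b c d e c_wf by blast
qed

end

lemma key:
  fixes k :: real
  assumes p: "pinv V E H P" and fin: "finite V" and zV: "z \<in> tV H" and rd: "red_degree H z \<le> d"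
    and small: "\<forall>w\<in>tV H - {z}. real (card (P w)) < k" and big: "k \<le> real (card (P z))"
    and big2: "real (card (P z)) < 2*k" and kdef: "real (card V) = (real d + 4) * k"
  shows "\<exists>X Y. X \<subseteq> V \<and> Y \<subseteq> V \<and> X \<inter> Y = {} \<and>
           real (card X) \<ge> k \<and> real (card Y) \<ge> k \<and>
           ((\<forall>x\<in>X. \<forall>y\<in>Y. {x, y} \<in> E) \<or> (\<forall>x\<in>X. \<forall>y\<in>Y. {x, y} \<notin> E))"
proof -
  have wf: "wft H" and sub: "\<forall>x\<in>tV H. P x \<subseteq> V" and dis: "\<forall>x\<in>tV H. \<forall>y\<in>tV H. x\<noteq>y \<longrightarrow> P x \<inter> P y = {}"
   and cov: "V \<subseteq> \<Union>(P ` tV H)"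
   and blk: "\<forall>x\<in>tV H. \<forall>y\<in>tV H. x\<noteq>y \<longrightarrow> {x,y}\<in>tB H \<longrightarrow> (\<forall>a\<in>P x. \<forall>b\<in>P y. {a,b}\<in>E)"
   and non: "\<forall>x\<in>tV H. \<forall>y\<in>tV H. x\<noteq>y \<longrightarrow> \<not>adjacent H x y \<longrightarrow> (\<forall>a\<in>P x. \<forall>b\<in>P y. {a,b}\<notin>E)"
    using p unfolding pinv_def by auto
  have finH: "finite (tV H)" using wf unfolding wft_def by auto
  define W where "W = tV H - {z}"
  define R where "R = {w\<in>W. {z,w} \<in> tR H}"
  define B where "B = {w\<in>W. {z,w} \<in> tB H}"
  define N where "N = {w\<in>W. \<not> adjacent H z w}"
  define UR where "UR = \<Union>(P ` R)"
  define UB where "UB = \<Union>(P ` B)"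
  define UNN where "UNN = \<Union>(P ` N)"
  have finR: "finite R" using finH unfolding R_def W_def by auto
  have "V \<subseteq> P z \<union> UR \<union> (UB \<union> UNN)"
  proof
    fix a assume "a \<in> V"
    then obtain x where x: "x \<in> tV H" "a \<in> P x" using cov by auto
    show "a \<in> P z \<union> UR \<union> (UB \<union> UNN)"
    proof (cases "x = z")
      case True then show ?thesis using x by auto
    next
      case False
      then have "x \<in> W" using x W_def by auto
      then have "x \<in> R \<or> x \<in> B \<or> x \<in> N" unfolding R_def B_def N_def adjacent_def by auto
      then show ?thesis using x unfolding UR_def UB_def UNN_def by auto
    qed
  qed
  moreover have fUR: "finite UR" "finite UB" "finite UNN" "finite (P z)"
  proof -
    have "UR \<subseteq> V" "UB \<subseteq> V" "UNN \<subseteq> V" "P z \<subseteq> V"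
      using sub zV unfolding UR_def UB_def UNN_def R_def B_def N_def W_def by auto
    then show "finite UR" "finite UB" "finite UNN" "finite (P z)" using fin finite_subset by blast+
  qed
  ultimately have "card V \<le> card (P z \<union> UR \<union> (UB \<union> UNN))"
    by (intro card_mono) auto
  also have "\<dots> \<le> card (P z) + card UR + (card UB + card UNN)"
    by (meson add_mono card_Un_le le_trans)
  finally have c1: "real (card V) \<le> real (card (P z)) + real (card UR) + real (card UB) + real (card UNN)"
    by linarith
  have "card UR \<le> (\<Sum>w\<in>R. card (P w))" unfolding UR_def using card_UN_le[OF finR] by blast
  then have "real (card UR) \<le> (\<Sum>w\<in>R. real (card (P w)))" by (metis of_nat_le_iff of_nat_sum)
  also have "\<dots> \<le> (\<Sum>w\<in>R. k)" using small unfolding R_def W_def by (intro sum_mono) (auto simp: less_imp_le)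
  also have "\<dots> = real (card R) * k" by simp
  also have "\<dots> \<le> real d * k"
  proof -
    have "R \<subseteq> {y. {z, y} \<in> tR H}" unfolding R_def by auto
    moreover have "finite {y. {z, y} \<in> tR H}"
      using wf finH unfolding wft_def by (metis (no_types, lifting) Un_iff insert_subset mem_Collect_eq rev_finite_subset subsetI)
    ultimately have "card R \<le> red_degree H z" unfolding red_degree_def by (simp add: card_mono)
    then have "card R \<le> d" using rd by auto
    moreover have "k \<ge> 0" using big2 by simp
    ultimately show ?thesis by (simp add: mult_right_mono)
  qed
  finally have c2: "real (card UR) \<le> real d * k" .
  have "real (card UB) + real (card UNN) > 2 * k" using c1 c2 big2 kdef by (simp add: algebra_simps)
  then have "real (card UB) \<ge> k \<or> real (card UNN) \<ge> k" by linarith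
  moreover have "P z \<subseteq> V" "UB \<subseteq> V" "UNN \<subseteq> V" using sub zV unfolding UB_def UNN_def B_def N_def W_def by auto
  moreover have "P z \<inter> UB = {}" "P z \<inter> UNN = {}" using dis zV unfolding UB_def UNN_def B_def N_def W_def by auto
  moreover have "\<forall>x\<in>P z. \<forall>y\<in>UB. {x, y} \<in> E" using blk zV unfolding UB_def B_def W_def by fastforce
  moreover have "\<forall>x\<in>P z. \<forall>y\<in>UNN. {x, y} \<notin> E" using non zV unfolding UNN_def N_def W_def by fastforce
  ultimately show ?thesis using big by blast
qed


lemma red_le: "wft H \<Longrightarrow> red_degree H x \<le> card (tV H)"
proof -
  assume wf: "wft H"
  have "{y. {x, y} \<in> tR H} \<subseteq> tV H" using wf unfolding wft_def by blast
  then show ?thesis unfolding red_degree_def using wf unfolding wft_def by (simp add: card_mono)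
qed

lemma seq_exists: "wft H \<Longrightarrow> card (tV H) = Suc m \<Longrightarrow> \<exists>Hs. length Hs = Suc m \<and> Hs!0 = H \<and>
  card (tV (Hs!m)) = 1 \<and> (\<forall>i<Suc m. wft (Hs!i) \<and> card (tV (Hs!i)) \<le> Suc m) \<and>
  (\<forall>i. i+1 < Suc m \<longrightarrow> is_contraction (Hs!i) (Hs!(i+1)))"
proof (induction m arbitrary: H)
  case 0
  then show ?case by (intro exI[of _ "[H]"]) auto
next
  case (Suc m)
  have fin: "finite (tV H)" using Suc.prems unfolding wft_def by auto
  obtain u where u: "u \<in> tV H" using Suc.prems by fastforce
  have "card (tV H - {u}) = Suc m" using Suc.prems u fin by simp
  then have "tV H - {u} \<noteq> {}" by (metis card.empty nat.distinct(1))
  then obtain v where v: "v \<in> tV H - {u}" by blast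
  let ?H = "contract H u v u"
  have uv: "u \<noteq> v" "v \<in> tV H" using v by auto
  have z: "u \<notin> tV H - {u, v}" by auto
  have wf': "wft ?H" using c_wf[OF Suc.prems(1) u uv(2) uv(1) z] .
  have "tV ?H = tV H - {v}" using u uv by (auto simp: contract_def)
  then have cH: "card (tV ?H) = Suc m" using Suc.prems uv fin by simp
  obtain Hs where Hs: "length Hs = Suc m" "Hs!0 = ?H" "card (tV (Hs!m)) = 1"
    "\<forall>i<Suc m. wft (Hs!i) \<and> card (tV (Hs!i)) \<le> Suc m"
    "\<forall>i. i+1 < Suc m \<longrightarrow> is_contraction (Hs!i) (Hs!(i+1))"
    using Suc.IH[OF wf' cH] by blast
  have ic: "is_contraction H ?H" unfolding is_contraction_def using u uv z by blast
  show ?case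
  proof (intro exI[of _ "H # Hs"] conjI allI impI)
    show "length (H # Hs) = Suc (Suc m)" using Hs by simp
    show "(H # Hs) ! 0 = H" by simp
    show "card (tV ((H # Hs) ! Suc m)) = 1" using Hs by simp
  next
    fix i assume i: "i < Suc (Suc m)"
    show "wft ((H # Hs) ! i)" using Hs Suc.prems i by (cases i) auto
    show "card (tV ((H # Hs) ! i)) \<le> Suc (Suc m)" using Hs Suc.prems i by (cases i) auto
  next
    fix i assume i: "i + 1 < Suc (Suc m)"
    show "is_contraction ((H # Hs) ! i) ((H # Hs) ! (i + 1))"
    proof (cases i)
      case 0 then show ?thesis using ic Hs by simp
    next
      case (Suc j) then show ?thesis using Hs i by simp
    qed
  qed
qed

theorem mainTheorem11:
  fixes V :: "'a set" and E :: "'a set set" and d :: nat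
  assumes "is_graph V E"
    and "card V \<ge> 2"
    and "twin_width V E \<le> d"
  shows "\<exists>X Y. X \<subseteq> V \<and> Y \<subseteq> V \<and> X \<inter> Y = {} \<and>
           real (card X) \<ge> real (card V) / (real d + 4) \<and>
           real (card Y) \<ge> real (card V) / (real d + 4) \<and>
           ((\<forall>x\<in>X. \<forall>y\<in>Y. {x, y} \<in> E) \<or> (\<forall>x\<in>X. \<forall>y\<in>Y. {x, y} \<notin> E))"
proof -
  define n where "n = card V"
  define k :: real where "k = real n / (real d + 4)"
  have fin: "finite V" using assms(1) unfolding is_graph_def by auto
  have G0: "wft (graph_trigraph V E)" using assms(1) unfolding is_graph_def wft_def graph_trigraph_def by auto
  have kdef: "real n = (real d + 4) * k" unfolding k_def by simp
  have k0: "k \<ge> 0" unfolding k_def by simp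
  have "real n * 1 \<le> real n * (real d + 4)" by (intro mult_left_mono) auto
  then have kn: "k \<le> real n" unfolding k_def by (simp add: divide_le_eq)
  show ?thesis
  proof (cases "k \<le> 1")
    case True
    obtain a where a: "a \<in> V" using assms(2) by fastforce
    have "card (V - {a}) \<ge> 1" using assms(2) a fin by simp
    then have "V - {a} \<noteq> {}" by (metis card.empty not_one_le_zero)
    then obtain b where b: "b \<in> V - {a}" by blast
    have "{a} \<subseteq> V \<and> {b} \<subseteq> V \<and> {a} \<inter> {b} = {} \<and> real (card {a}) \<ge> k \<and> real (card {b}) \<ge> k \<and>
      ((\<forall>x\<in>{a}. \<forall>y\<in>{b}. {x, y} \<in> E) \<or> (\<forall>x\<in>{a}. \<forall>y\<in>{b}. {x, y} \<notin> E))"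
      using a b True by auto
    then show ?thesis unfolding k_def n_def by blast
  next
    case False
    have "\<exists>Hs. d_sequence n V E Hs"
    proof -
      obtain m where m: "n = Suc m" using assms(2) unfolding n_def by (metis Suc_le_D numeral_2_eq_2)
      obtain Hs where Hs: "length Hs = Suc m" "Hs!0 = graph_trigraph V E"
        "card (tV (Hs!m)) = 1" "\<forall>i<Suc m. wft (Hs!i) \<and> card (tV (Hs!i)) \<le> Suc m"
        "\<forall>i. i+1 < Suc m \<longrightarrow> is_contraction (Hs!i) (Hs!(i+1))"
        using seq_exists[OF G0, of m] m n_def by (auto simp: graph_trigraph_def)
      have "d_sequence n V E Hs" unfolding d_sequence_def is_d_trigraph_def
        using Hs m n_def by (auto intro: le_trans[OF red_le])
      then show ?thesis by blast
    qed
    then have "\<exists>Hs. d_sequence (twin_width V E) V E Hs"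
      unfolding twin_width_def by (rule LeastI[where P = "\<lambda>d. \<exists>Hs. d_sequence d V E Hs"])
    then obtain Hs where Hs: "d_sequence (twin_width V E) V E Hs" by blast
    have len: "length Hs = n" and H0: "Hs ! 0 = graph_trigraph V E"
      and last: "card (tV (Hs ! (n - 1))) = 1"
      and dtri: "\<forall>i < n. is_d_trigraph (twin_width V E) (Hs ! i)"
      and con: "\<forall>i. i + 1 < n \<longrightarrow> is_contraction (Hs ! i) (Hs ! (i + 1))"
      using Hs unfolding d_sequence_def n_def by auto
    let ?C = "\<exists>X Y. X \<subseteq> V \<and> Y \<subseteq> V \<and> X \<inter> Y = {} \<and>
           real (card X) \<ge> k \<and> real (card Y) \<ge> k \<and>
           ((\<forall>x\<in>X. \<forall>y\<in>Y. {x, y} \<in> E) \<or> (\<forall>x\<in>X. \<forall>y\<in>Y. {x, y} \<notin> E))"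
    have ind: "i < n \<Longrightarrow> ?C \<or> (\<exists>P. pinv V E (Hs!i) P \<and> (\<forall>w\<in>tV (Hs!i). real (card (P w)) < k))" for i
    proof (induction i)
      case 0
      have "pinv V E (Hs!0) (\<lambda>x. {x})" using H0 G0
        unfolding pinv_def graph_trigraph_def adjacent_def by auto
      moreover have "\<forall>w\<in>tV (Hs!0). real (card {w}) < k" using False by simp
      ultimately show ?case by blast
    next
      case (Suc i)
      show ?case
      proof (cases ?C)
        case True then show ?thesis by blast
      next
        case nC: False
        then obtain P where P: "pinv V E (Hs!i) P" "\<forall>w\<in>tV (Hs!i). real (card (P w)) < k"
        proof -
          have "i < n" using Suc.prems by simp
          then show ?thesis using Suc.IH nC that by blast
        qed
        obtain u v z where uvz: "u \<in> tV (Hs!i)" "v \<in> tV (Hs!i)" "u \<noteq> v" "z \<notin> tV (Hs!i) - {u, v}"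
          "Hs!(Suc i) = contract (Hs!i) u v z"
          using con Suc.prems unfolding is_contraction_def by fastforce
        have wf: "wft (Hs!i)" using P unfolding pinv_def by auto
        define P' where "P' = P(z := P u \<union> P v)"
        have P': "pinv V E (Hs!Suc i) P'" unfolding P'_def uvz(5)
          by (rule c_pinv[OF wf uvz(1-4) P(1)])
        have VV: "tV (Hs!Suc i) = tV (Hs!i) - {u, v} \<union> {z}" unfolding uvz(5) by (rule c_V[OF wf uvz(1-4)])
        have oth: "\<forall>w\<in>tV (Hs!Suc i) - {z}. real (card (P' w)) < k"
          using P(2) VV unfolding P'_def by auto
        show ?thesis
        proof (cases "\<forall>w\<in>tV (Hs!Suc i). real (card (P' w)) < k")
          case True then show ?thesis using P' by blast
        next
          case F2: False
          then have bigz: "k \<le> real (card (P' z))" using oth VV by force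
          have "card (P' z) \<le> card (P u) + card (P v)" unfolding P'_def by (simp add: card_Un_le)
          moreover have "real (card (P u)) < k" "real (card (P v)) < k" using P(2) uvz(1,2) by auto
          ultimately have "real (card (P' z)) < 2 * k" by linarith
          moreover have "red_degree (Hs!Suc i) z \<le> d"
            using dtri Suc.prems VV assms(3) unfolding is_d_trigraph_def by fastforce
          moreover have "z \<in> tV (Hs!Suc i)" using VV by auto
          ultimately have ?C using key[OF P' fin _ _ oth bigz _ kdef[unfolded n_def]] by blast
          then show ?thesis by blast
        qed
      qed
    qed
    have "n - 1 < n" using assms(2) n_def by auto
    from ind[OF this] have ?C
    proof
      assume "\<exists>P. pinv V E (Hs!(n-1)) P \<and> (\<forall>w\<in>tV (Hs!(n-1)). real (card (P w)) < k)"
      then obtain P where P: "pinv V E (Hs!(n-1)) P" "\<forall>w\<in>tV (Hs!(n-1)). real (card (P w)) < k" by blast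
      obtain w where w: "tV (Hs!(n-1)) = {w}" using last card_1_singletonE by blast
      have "V \<subseteq> P w" "P w \<subseteq> V" using P(1) w unfolding pinv_def by auto
      then have "card (P w) = n" unfolding n_def by auto
      then show ?C using P(2) w kn by auto
    qed
    then show ?thesis unfolding k_def n_def .
  qed
qed

end
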